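(* $\mathcal{TC}(\mathrm{RL}_1^P)\subsetneq\mathcal{TC}(\mathrm{RL}_2^P)$.
   Context: A right-linear grammar is $G=(N,T,P,S)$ with rules $A\to wB$ or $A\to w$ ($A,B\in N$, $w\in T^*$). For a regular language $L$, $\mathrm{Prod}_{RL}(L)$ is the minimum of $|P|$ over all right-linear grammars generating $L$, and $\mathrm{RL}_n^P=\{L\text{ regular}:\mathrm{Prod}_{RL}(L)\le n\}$. A tree-controlled grammar is a quintuple $G=(N,T,P,S,R)$ where $(N,T,P,S)$ is a context-free grammar whose rules are all non-erasing, except that $S\to\lambda$ is allowed if $S$ does not occur on the right-hand side of any rule, and $R\subseteq (N\cup T)^*$ is a regular control language. The word of level $j$ of a derivation tree is the word of all nodes of depth $j$ read left to right. $L(G)$ consists of all $z\in T^*$ having a derivation tree with yield $z$ such that the words of all levels except the last belong to $R$. For a family $\mathcal F$ of regular languages, $\mathcal{TC}(\mathcal F)$ is the family of languages generated by tree-controlled grammars with control language in $\mathcal F$. *)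

theory Defs
  imports Main
begin

(* Symbols (terminals and nonterminals of all grammars) are natural numbers:
   an infinite supply of symbols, as is standard for language families. *)

(* rule (A, w, Some B) is A -> wB ; rule (A, w, None) is A -> w *)
record rlg =
  rN :: "nat set"
  rT :: "nat set"
  rP :: "(nat \<times> nat list \<times> nat option) set"
  rS :: nat

definition rl_wf :: "rlg \<Rightarrow> bool" where
  "rl_wf G \<longleftrightarrow> finite (rN G) \<and> finite (rT G) \<and> finite (rP G) \<and>
     rN G \<inter> rT G = {} \<and> rS G \<in> rN G \<and>
     (\<forall>(A, w, B) \<in> rP G. A \<in> rN G \<and> set w \<subseteq> rT G \<and>
        (\<forall>X. B = Some X \<longrightarrow> X \<in> rN G))"

inductive rl_gen :: "rlg \<Rightarrow> nat \<Rightarrow> nat list \<Rightarrow> bool" for G where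
  term_rule: "(A, w, None) \<in> rP G \<Longrightarrow> rl_gen G A w"
| cont_rule: "(A, u, Some B) \<in> rP G \<Longrightarrow> rl_gen G B v \<Longrightarrow> rl_gen G A (u @ v)"

definition rl_lang :: "rlg \<Rightarrow> nat list set" where
  "rl_lang G = {w. rl_gen G (rS G) w}"

definition RLP :: "nat \<Rightarrow> nat list set set" where
  "RLP n = {L. \<exists>G. rl_wf G \<and> card (rP G) \<le> n \<and> rl_lang G = L}"

record cfg =
  cN :: "nat set"
  cT :: "nat set"
  cP :: "(nat \<times> nat list) set"
  cS :: nat

definition tc_wf :: "cfg \<Rightarrow> nat list set \<Rightarrow> bool" where
  "tc_wf G R \<longleftrightarrow> finite (cN G) \<and> finite (cT G) \<and> finite (cP G) \<and>
     cN G \<inter> cT G = {} \<and> cS G \<in> cN G \<and>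
     (\<forall>(A, \<alpha>) \<in> cP G. A \<in> cN G \<and> set \<alpha> \<subseteq> cN G \<union> cT G) \<and>
     (\<forall>(A, \<alpha>) \<in> cP G. \<alpha> = [] \<longrightarrow>
        A = cS G \<and> (\<forall>(B, \<beta>) \<in> cP G. cS G \<notin> set \<beta>)) \<and>
     R \<subseteq> lists (cN G \<union> cT G)"

(* derivation trees: terminal leaves, a lambda-leaf (for S -> lambda), inner nodes *)
datatype dtree = Lf nat | Eps | Nd nat "dtree list"

fun root :: "dtree \<Rightarrow> nat" where
  "root (Lf a) = a"
| "root Eps = undefined"
| "root (Nd A ts) = A"

inductive is_dtree :: "cfg \<Rightarrow> dtree \<Rightarrow> bool" for G where
  leaf: "a \<in> cT G \<Longrightarrow> is_dtree G (Lf a)"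
| inner: "(A, map root ts) \<in> cP G \<Longrightarrow> ts \<noteq> [] \<Longrightarrow> \<forall>t \<in> set ts. is_dtree G t
          \<Longrightarrow> is_dtree G (Nd A ts)"
| eps: "(A, []) \<in> cP G \<Longrightarrow> is_dtree G (Nd A [Eps])"

fun yield :: "dtree \<Rightarrow> nat list" where
  "yield (Lf a) = [a]"
| "yield Eps = []"
| "yield (Nd A ts) = concat (map yield ts)"

fun height :: "dtree \<Rightarrow> nat" where
  "height (Lf a) = 0"
| "height Eps = 0"
| "height (Nd A ts) = Suc (fold max (map height ts) 0)"

fun level :: "dtree \<Rightarrow> nat \<Rightarrow> nat list" where
  "level (Lf a) j = (if j = 0 then [a] else [])"
| "level Eps j = []"
| "level (Nd A ts) j = (if j = 0 then [A] else concat (map (\<lambda>t. level t (j - 1)) ts))"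

definition tc_lang :: "cfg \<Rightarrow> nat list set \<Rightarrow> nat list set" where
  "tc_lang G R = {yield t | t. is_dtree G t \<and> root t = cS G \<and>
                     (\<forall>j < height t. level t j \<in> R)}"

definition TC :: "nat list set set \<Rightarrow> nat list set set" where
  "TC F = {L. \<exists>G R. tc_wf G R \<and> R \<in> F \<and> L = tc_lang G R}"

end

theory Submission
  imports Defs
begin

lemma fold_max_eq: "fold max xs (m::nat) = Max (insert m (set xs))"
  using Max.set_eq_fold[of m xs] by simp

lemma rl_gen_term:
  assumes "rl_gen G X v" "finite (rP G)" "card (rP G) \<le> 1"
  shows "(X, v, None) \<in> rP G"
  using assms
proof (induction rule: rl_gen.induct)
  case (term_rule A w) then show ?case by simp
next
  case (cont_rule A u B v)
  then have "(B, v, None) \<in> rP G" by simp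
  moreover have "(A, u, Some B) \<noteq> (B, v, None)" by simp
  ultimately have "card {(A, u, Some B), (B, v, None)} \<le> card (rP G)"
    using cont_rule by (intro card_mono) auto
  then show ?case using cont_rule by simp
qed

lemma RLP1_single:
  assumes "R \<in> RLP 1" "x \<in> R" "y \<in> R" shows "x = y"
proof -
  obtain G where G: "rl_wf G" "card (rP G) \<le> 1" "rl_lang G = R"
    using assms(1) unfolding RLP_def by auto
  have f: "finite (rP G)" using G(1) unfolding rl_wf_def by auto
  have "(rS G, x, None) \<in> rP G" "(rS G, y, None) \<in> rP G"
    using rl_gen_term[OF _ f G(2)] assms G(3) unfolding rl_lang_def by auto
  moreover
  { assume "x \<noteq> y"
    then have c2: "card {(rS G, x, None::nat option), (rS G, y, None)} = 2" by simp
    have "card {(rS G, x, None::nat option), (rS G, y, None)} \<le> card (rP G)"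
      using calculation card_mono[OF f, of "{(rS G, x, None::nat option), (rS G, y, None)}"] by auto
    with c2 have "2 \<le> card (rP G)" by simp
    with G(2) have False by simp }
  ultimately show ?thesis by blast
qed

lemma dtree_not_eps: "is_dtree G t \<Longrightarrow> t \<noteq> Eps"
  by (cases rule: is_dtree.cases) auto

lemma level0: "is_dtree G t \<Longrightarrow> level t 0 = [root t]"
  by (cases rule: is_dtree.cases) auto

lemma height_pos_Nd: "height (Nd A ts) > 0" by simp

lemma chain_yield:
  assumes "is_dtree G t" "height t > 0" "\<forall>j<height t. level t j = [S]"
  shows "yield t \<in> snd ` cP G"
  using assms
proof (induction rule: is_dtree.induct)
  case (leaf a) then show ?case by simp
next
  case (eps A) then show ?case by force
next
  case (inner A ts)
  define h where "h = fold max (map height ts) 0"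
  have hM: "h = Max (insert 0 (height ` set ts))" unfolding h_def fold_max_eq by simp
  show ?case
  proof (cases "h = 0")
    case True
    have z: "\<forall>c\<in>set ts. height c = 0"
    proof
      fix c assume "c \<in> set ts"
      then have "height c \<le> Max (insert 0 (height ` set ts))" by (intro Max_ge) auto
      then show "height c = 0" using True hM by simp
    qed
    have "\<forall>c\<in>set ts. yield c = [root c]"
    proof
      fix c assume c: "c \<in> set ts"
      then have "is_dtree G c" using inner by auto
      then show "yield c = [root c]" using z c by (cases rule: is_dtree.cases) auto
    qed
    then have "yield (Nd A ts) = map root ts"
      by (induction ts) auto
    then show ?thesis using inner(1) by force
  next
    case False
    then have ht: "height (Nd A ts) = Suc h" unfolding h_def by simp
    have "level (Nd A ts) 1 = [S]" using inner(5) False ht by auto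
    moreover have "level (Nd A ts) 1 = map root ts"
    proof -
      have "\<forall>c\<in>set ts. level c 0 = [root c]" using inner(3) level0 by blast
      then show ?thesis by simp (induction ts; auto)
    qed
    ultimately have "map root ts = [S]" by simp
    then obtain c where c: "ts = [c]" by (cases ts) auto
    have hc: "height c = h" using c unfolding h_def by simp
    have "\<forall>j<height c. level c j = [S]"
    proof (intro allI impI)
      fix j assume "j < height c"
      then have "Suc j < height (Nd A ts)" using ht hc by simp
      then have "level (Nd A ts) (Suc j) = [S]" using inner(5) by blast
      then show "level c j = [S]" using c by simp
    qed
    then have "yield c \<in> snd ` cP G" using inner(3) c hc False by auto
    then show ?thesis using c by simp
  qed
qed

lemma TC1_finite: assumes "L \<in> TC (RLP 1)" shows "finite L"
proof -
  obtain G R where GR: "tc_wf G R" "R \<in> RLP 1" "L = tc_lang G R"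
    using assms unfolding TC_def by auto
  have "L \<subseteq> snd ` cP G"
  proof
    fix z assume "z \<in> L"
    then obtain t where t: "z = yield t" "is_dtree G t" "root t = cS G"
      "\<forall>j<height t. level t j \<in> R" using GR(3) unfolding tc_lang_def by auto
    have hp: "height t > 0"
    proof (rule ccontr)
      assume "\<not> 0 < height t"
      then have "height t = 0" by simp
      with t(2) obtain a where "t = Lf a" "a \<in> cT G"
        by (cases rule: is_dtree.cases) auto
      then show False using t(3) GR(1) unfolding tc_wf_def by auto
    qed
    have "level t 0 \<in> R" using t(4) hp by auto
    moreover have "level t 0 = [cS G]" using level0[OF t(2)] t(3) by simp
    ultimately have "\<forall>j<height t. level t j = [cS G]"
      using t(4) RLP1_single[OF GR(2)] by metis
    then show "z \<in> snd ` cP G" using chain_yield[OF t(2) hp, of "cS G"] t(1) by simp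
  qed
  moreover have "finite (cP G)" using GR(1) unfolding tc_wf_def by auto
  ultimately show ?thesis using finite_subset by blast
qed

primrec tt :: "nat \<Rightarrow> dtree" where
  "tt 0 = Nd 0 [Lf 1]"
| "tt (Suc n) = Nd 0 [Lf 1, tt n]"

definition G0 :: cfg where
  "G0 = \<lparr>cN = {0}, cT = {1}, cP = {(0, [1, 0]), (0, [1])}, cS = 0\<rparr>"

definition R0 :: "nat list set" where "R0 = {[0], [1, 0]}"

definition H0 :: rlg where
  "H0 = \<lparr>rN = {2}, rT = {0, 1}, rP = {(2, [0], None), (2, [1, 0], None)}, rS = 2\<rparr>"

lemma tt_dtree: "is_dtree G0 (tt n)"
proof (induction n)
  have l: "is_dtree G0 (Lf 1)" by (rule is_dtree.leaf) (simp add: G0_def)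
  case 0
  have "(0, map root [Lf 1]) \<in> cP G0" by (simp add: G0_def)
  then show ?case using l by (simp add: is_dtree.inner)
next
  have l: "is_dtree G0 (Lf 1)" by (rule is_dtree.leaf) (simp add: G0_def)
  case (Suc n)
  have r: "root (tt n) = 0" by (cases n) auto
  have "(0, map root [Lf 1, tt n]) \<in> cP G0" by (simp add: G0_def r)
  then show ?case using l Suc by (simp add: is_dtree.inner)
qed

lemma tt_height: "height (tt n) = Suc n"
  by (induction n) auto

lemma tt_yield: "yield (tt n) = replicate (Suc n) 1"
  by (induction n) auto

lemma tt_level: "j \<le> n \<Longrightarrow> level (tt n) j \<in> R0"
proof (induction n arbitrary: j)
  case 0 then show ?case by (simp add: R0_def)
next
  case (Suc n)
  show ?case
  proof (cases j)
    case 0 then show ?thesis by (simp add: R0_def)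
  next
    case (Suc k)
    show ?thesis
    proof (cases k)
      case 0
      have "level (tt n) 0 = [0]" by (cases n) auto
      then show ?thesis using Suc 0 by (simp add: R0_def)
    next
      case (Suc m)
      then show ?thesis using \<open>j = Suc k\<close> Suc.prems Suc.IH[of k] by simp
    qed
  qed
qed

lemma H0_lang: "rl_lang H0 = R0"
proof
  show "rl_lang H0 \<subseteq> R0"
  proof
    fix v assume "v \<in> rl_lang H0"
    then have "rl_gen H0 (rS H0) v" unfolding rl_lang_def by simp
    then show "v \<in> R0" by (cases rule: rl_gen.cases) (auto simp: H0_def R0_def)
  qed
  show "R0 \<subseteq> rl_lang H0"
    unfolding R0_def rl_lang_def by (auto intro: rl_gen.term_rule simp: H0_def)
qed

lemma R0_RLP2: "R0 \<in> RLP 2"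
  unfolding RLP_def
  apply (rule CollectI, rule exI[of _ H0])
  using H0_lang by (auto simp: rl_wf_def H0_def)

lemma L0_in: "tc_lang G0 R0 \<in> TC (RLP 2)"
  unfolding TC_def
proof (intro CollectI exI conjI)
  show "tc_wf G0 R0" by (auto simp: tc_wf_def G0_def R0_def)
qed (rule R0_RLP2, rule refl)

lemma L0_inf: "infinite (tc_lang G0 R0)"
proof -
  have "range (\<lambda>n. yield (tt n)) \<subseteq> tc_lang G0 R0"
  proof (rule subsetI)
    fix z assume "z \<in> range (\<lambda>n. yield (tt n))"
    then obtain n where z: "z = yield (tt n)" by blast
    have r: "root (tt n) = cS G0" by (cases n) (auto simp: G0_def)
    have "\<forall>j<height (tt n). level (tt n) j \<in> R0"
      using tt_level by (simp add: tt_height less_Suc_eq_le)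
    then show "z \<in> tc_lang G0 R0" unfolding tc_lang_def using z r tt_dtree by blast
  qed
  moreover have "inj (\<lambda>n. yield (tt n))"
    by (rule injI) (simp add: tt_yield)
  ultimately show ?thesis using infinite_iff_countable_subset by blast
qed

theorem mainTheorem6:
  shows "TC (RLP 1) \<subset> TC (RLP 2)"
proof -
  have "RLP 1 \<subseteq> RLP 2" unfolding RLP_def by auto
  then have "TC (RLP 1) \<subseteq> TC (RLP 2)" unfolding TC_def by blast
  moreover have "tc_lang G0 R0 \<notin> TC (RLP 1)" using TC1_finite L0_inf by blast
  ultimately show ?thesis using L0_in by blast
qed

end
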